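(* Let $z \in G_D(\mathbb{Q})$ and suppose $z = \pm\zeta_{p_1}^{\pm \alpha_1} \cdots \zeta_{p_k}^{\pm \alpha_k}$, where $p_1,\dots,p_k$ are distinct odd primes with $\left(\frac{-D}{p_i}\right) = 1$ for all $i$ and $\alpha_i \ge 1$. If $z$ corresponds to the normalized triple $(a, b, c)$, i.e. $z = \frac{\pm a \pm b\sqrt{-D}}{c}$ with $a^2+Db^2=c^2$, $a,b,c\in\mathbb{N}$ and $\gcd(a,b,c)=1$, then $c = p_1^{\alpha_1} \cdots p_k^{\alpha_k}$.
   Context: Let $D>1$ be a square-free integer with $-D \equiv 2$ or $3 \pmod 4$, and assume the class group $C(-4D)$ of primitive positive-definite binary quadratic forms of discriminant $-4D$ is a free $\mathbb{Z}_2$-module, i.e. $C(-4D)\cong(\mathbb{Z}/2\mathbb{Z})^n$ for some $n\ge 0$. Let $G_D(\mathbb{Q}) := \{a + b\sqrt{-D} \in \mathbb{Q}[\sqrt{-D}] : a^2 + Db^2 = 1\}$, a group under multiplication. A solution $(a,b,c)$ with $a,b,c\in\mathbb{N}$ of $x^2+Dy^2=z^2$ is normalized if $\gcd(a,b,c)=1$. For each odd prime $q$ with Legendre symbol $\left(\frac{-D}{q}\right) = 1$, there exist unique positive integers $x_0, y_0$ with $\gcd(x_0,y_0)=1$ and $q^2 = x_0^2 + D y_0^2$; define $\zeta_q := \frac{x_0 + y_0\sqrt{-D}}{q} \in G_D(\mathbb{Q})$. *)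

theory Defs
  imports Complex_Main "HOL-Number_Theory.Number_Theory" "HOL-Computational_Algebra.Squarefree"
begin

definition form_eval :: "int \<times> int \<times> int \<Rightarrow> int \<Rightarrow> int \<Rightarrow> int" where
  "form_eval f x y = (case f of (a, b, c) \<Rightarrow> a * x^2 + b * x * y + c * y^2)"

definition form_disc :: "int \<times> int \<times> int \<Rightarrow> int" where
  "form_disc f = (case f of (a, b, c) \<Rightarrow> b^2 - 4 * a * c)"

definition prim_pos_def_form :: "int \<Rightarrow> int \<times> int \<times> int \<Rightarrow> bool" where
  "prim_pos_def_form d f = (case f of (a, b, c) \<Rightarrow>
      form_disc f = d \<and> d < 0 \<and> a > 0 \<and> gcd (gcd a b) c = 1)"

definition form_equiv :: "int \<times> int \<times> int \<Rightarrow> int \<times> int \<times> int \<Rightarrow> bool" where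
  "form_equiv f g = (\<exists>p q r s. p * s - q * r = 1 \<and>
      (\<forall>x y. form_eval g x y = form_eval f (p * x + q * y) (r * x + s * y)))"

text \<open>The inverse of the class of (a,b,c) in the form class group C(d) is the class of (a,-b,c).
  The class group C(d) is an elementary abelian 2-group (i.e. a free Z/2-module, isomorphic to
  (Z/2)^n) iff every class equals its own inverse.\<close>
definition class_group_elem_2 :: "int \<Rightarrow> bool" where
  "class_group_elem_2 d = (\<forall>a b c. prim_pos_def_form d (a, b, c) \<longrightarrow> form_equiv (a, b, c) (a, -b, c))"

definition sqrtmD :: "int \<Rightarrow> complex" where
  "sqrtmD D = \<i> * complex_of_real (sqrt (real_of_int D))"

definition G_D :: "int \<Rightarrow> complex set" where
  "G_D D = {of_rat a + of_rat b * sqrtmD D | a b :: rat. a^2 + of_int D * b^2 = 1}"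

definition zeta :: "int \<Rightarrow> nat \<Rightarrow> complex" where
  "zeta D q = (let (x0, y0) = (THE (x, y). x > 0 \<and> y > 0 \<and> coprime x y \<and>
                         (int q)^2 = x^2 + D * y^2)
               in (of_int x0 + of_int y0 * sqrtmD D) / of_nat q)"

end

theory Submission
  imports Defs
begin

definition pmul :: "int \<Rightarrow> int \<times> int \<Rightarrow> int \<times> int \<Rightarrow> int \<times> int" where
  "pmul D a b = (fst a * fst b - D * snd a * snd b, fst a * snd b + snd a * fst b)"

fun ppow :: "int \<Rightarrow> int \<times> int \<Rightarrow> nat \<Rightarrow> int \<times> int" where
  "ppow D a 0 = (1, 0)"
| "ppow D a (Suc n) = pmul D (ppow D a n) a"

fun pprod :: "int \<Rightarrow> (nat \<Rightarrow> int \<times> int) \<Rightarrow> nat \<Rightarrow> int \<times> int" where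
  "pprod D f 0 = (1, 0)"
| "pprod D f (Suc n) = pmul D (pprod D f n) (f n)"

definition pnorm :: "int \<Rightarrow> int \<times> int \<Rightarrow> int" where
  "pnorm D a = fst a ^ 2 + D * snd a ^ 2"

definition emb :: "int \<Rightarrow> int \<times> int \<Rightarrow> complex" where
  "emb D a = of_int (fst a) + of_int (snd a) * sqrtmD D"

definition phi :: "int \<Rightarrow> int \<times> int \<Rightarrow> int" where
  "phi t a = fst a + snd a * t"

lemma coprime_by_primes:
  fixes u v :: int
  assumes "\<And>r. prime r \<Longrightarrow> r dvd u \<Longrightarrow> r dvd v \<Longrightarrow> False"
  shows "coprime u v"
proof (rule ccontr)
  assume "\<not> coprime u v"
  then have "\<bar>gcd u v\<bar> \<noteq> 1" by (simp add: coprime_iff_gcd_eq_1)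
  then obtain r where "prime r" "r dvd gcd u v" by (rule prime_factor_int)
  then show False using assms by auto
qed

lemma sqrtmD_sq: "D \<ge> 0 \<Longrightarrow> sqrtmD D ^ 2 = - of_int D"
proof -
  assume "D \<ge> 0"
  have "(complex_of_real (sqrt (real_of_int D)))\<^sup>2 = complex_of_real ((sqrt (real_of_int D))\<^sup>2)"
    by simp
  also have "\<dots> = complex_of_int D" using \<open>D \<ge> 0\<close> by simp
  finally show ?thesis unfolding sqrtmD_def by (simp add: power_mult_distrib)
qed

lemma emb_pmul: "D \<ge> 0 \<Longrightarrow> emb D (pmul D a b) = emb D a * emb D b"
proof -
  assume "D \<ge> 0"
  then have s: "sqrtmD D * sqrtmD D = - of_int D" using sqrtmD_sq[of D] by (simp add: power2_eq_square)
  have "emb D a * emb D b = of_int (fst a) * of_int (fst b) + of_int (snd a) * of_int (snd b) * (sqrtmD D * sqrtmD D)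
     + (of_int (fst a) * of_int (snd b) + of_int (snd a) * of_int (fst b)) * sqrtmD D"
    unfolding emb_def by (simp add: algebra_simps)
  also have "\<dots> = emb D (pmul D a b)" unfolding s emb_def pmul_def by (simp add: algebra_simps)
  finally show ?thesis by simp
qed

lemma emb_ppow: "D \<ge> 0 \<Longrightarrow> emb D (ppow D a n) = emb D a ^ n"
proof (induction n)
  case 0 then show ?case by (simp add: emb_def)
next
  case (Suc n) then show ?case by (simp add: emb_pmul)
qed

lemma pnorm_pmul: "pnorm D (pmul D a b) = pnorm D a * pnorm D b"
  unfolding pnorm_def pmul_def by (simp add: algebra_simps power2_eq_square)

lemma pnorm_ppow: "pnorm D (ppow D a n) = pnorm D a ^ n"
proof (induction n)
  case 0 then show ?case by (simp add: pnorm_def)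
next
  case (Suc n) then show ?case by (simp add: pnorm_pmul)
qed

lemma pnorm_pprod: "pnorm D (pprod D f n) = (\<Prod>i<n. pnorm D (f i))"
proof (induction n)
  case 0 then show ?case by (simp add: pnorm_def)
next
  case (Suc n) then show ?case by (simp add: pnorm_pmul)
qed

lemma phi_pmul: "q dvd t^2 + D \<Longrightarrow> [phi t (pmul D a b) = phi t a * phi t b] (mod q)"
proof -
  assume "q dvd t^2 + D"
  then have "q dvd (- snd a * snd b) * (t^2 + D)" by simp
  moreover have "phi t (pmul D a b) - phi t a * phi t b = (- snd a * snd b) * (t^2 + D)"
    unfolding phi_def pmul_def by (simp add: algebra_simps power2_eq_square)
  ultimately show ?thesis by (simp add: cong_iff_dvd_diff)
qed

lemma phi_ppow: "q dvd t^2 + D \<Longrightarrow> [phi t (ppow D a n) = phi t a ^ n] (mod q)"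
proof (induction n)
  case 0 then show ?case by (simp add: phi_def)
next
  case (Suc n)
  have "[phi t (pmul D (ppow D a n) a) = phi t (ppow D a n) * phi t a] (mod q)" by (rule phi_pmul[OF Suc.prems])
  moreover have "[phi t (ppow D a n) * phi t a = phi t a ^ n * phi t a] (mod q)"
    using Suc by (intro cong_mult) auto
  ultimately show ?case by (simp add: cong_trans mult.commute)
qed

lemma phi_pprod: "q dvd t^2 + D \<Longrightarrow> [phi t (pprod D f n) = (\<Prod>i<n. phi t (f i))] (mod q)"
proof (induction n)
  case 0 then show ?case by (simp add: phi_def)
next
  case (Suc n)
  have "[phi t (pmul D (pprod D f n) (f n)) = phi t (pprod D f n) * phi t (f n)] (mod q)" by (rule phi_pmul[OF Suc.prems])
  moreover have "[phi t (pprod D f n) * phi t (f n) = (\<Prod>i<n. phi t (f i)) * phi t (f n)] (mod q)"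
    using Suc by (intro cong_mult) auto
  ultimately show ?case by (simp add: cong_trans)
qed

lemma phi_conj: "q dvd t^2 + D \<Longrightarrow> [phi t a * phi (-t) a = pnorm D a] (mod q)"
proof -
  assume "q dvd t^2 + D"
  then have "q dvd (-(snd a ^ 2)) * (t^2 + D)" by simp
  moreover have "phi t a * phi (-t) a - pnorm D a = (-(snd a ^ 2)) * (t^2 + D)"
    unfolding phi_def pnorm_def by (simp add: algebra_simps power2_eq_square)
  ultimately show ?thesis by (simp add: cong_iff_dvd_diff)
qed



lemma rep_unique:
  fixes D q x y x' y' :: int
  assumes D: "D > 1" and q: "prime q" "odd q" and nD: "\<not> q dvd D"
    and pos: "x > 0" "y > 0" "x' > 0" "y' > 0"
    and cop: "coprime x y" "coprime x' y'"
    and e1: "q^2 = x^2 + D * y^2" and e2: "q^2 = x'^2 + D * y'^2"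
  shows "x = x' \<and> y = y'"
proof -
  have q0: "q > 0" using q prime_gt_0_int by blast
  have ndx: False if "q dvd x" "q^2 = x^2 + D * y^2" "coprime x y" for x y
  proof -
    have "q dvd x^2" using that(1) by (metis dvd_mult2 power2_eq_square)
    moreover have "D * y^2 = q^2 - x^2" using that(2) by simp
    moreover have "q dvd q^2" by (simp add: power2_eq_square)
    ultimately have "q dvd D * y^2" by (metis dvd_diff)
    then have "q dvd y^2" using q nD by (simp add: prime_dvd_mult_iff)
    then have "q dvd y" using q prime_dvd_power by blast
    then show False using that q by (meson coprime_common_divisor not_prime_unit)
  qed
  have ndy: False if "q dvd y" "q^2 = x^2 + D * y^2" "coprime x y" for x y
  proof -
    have "q dvd D * y^2" using that(1) by (metis dvd_mult2 dvd_mult power2_eq_square)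
    moreover have "x^2 = q^2 - D * y^2" using that(2) by simp
    moreover have "q dvd q^2" by (simp add: power2_eq_square)
    ultimately have "q dvd x^2" by (metis dvd_diff)
    then have "q dvd x" using q prime_dvd_power by blast
    then show False using that q by (meson coprime_common_divisor not_prime_unit)
  qed
  define A where "A = x*y' - x'*y"
  define B where "B = x*y' + x'*y"
  have key: "A * B = q^2 * (y'^2 - y^2)"
  proof -
    have "A * B = x^2*y'^2 - x'^2*y^2" unfolding A_def B_def by (simp add: algebra_simps power2_eq_square)
    also have "\<dots> = (q^2 - D*y^2)*y'^2 - (q^2 - D*y'^2)*y^2"
    proof -
      have h1: "x^2 = q^2 - D*y^2" "x'^2 = q^2 - D*y'^2" using e1 e2 by simp_all
      show ?thesis by (simp only: h1)
    qed
    also have "\<dots> = q^2 * (y'^2 - y^2)" by (simp add: algebra_simps)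
    finally show ?thesis .
  qed
  have not_both: "\<not> (q dvd A \<and> q dvd B)"
  proof
    assume "q dvd A \<and> q dvd B"
    then have "q dvd A + B" by auto
    moreover have "A + B = 2 * (x * y')" unfolding A_def B_def by simp
    ultimately have "q dvd 2 * (x * y')" by simp
    then have "q dvd 2 \<or> q dvd x \<or> q dvd y'" using q by (simp add: prime_dvd_mult_iff)
    moreover have "\<not> q dvd 2"
    proof
      assume "q dvd 2"
      then have "q = 2" using q zdvd_imp_le[of q 2] prime_ge_2_int[of q] by auto
      then show False using q by simp
    qed
    ultimately show False using ndx[OF _ e1 cop(1)] ndy[OF _ e2 cop(2)] by blast
  qed
  have qq: "q^2 dvd A * B" using key by simp
  have "q^2 dvd A \<or> q^2 dvd B"
  proof (cases "q dvd A")
    case True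
    then have "\<not> q dvd B" using not_both by blast
    then have "coprime (q^2) B" using q by (simp add: prime_imp_coprime)
    then show ?thesis using qq using coprime_dvd_mult_left_iff by blast
  next
    case False
    then have "coprime (q^2) A" using q by (simp add: prime_imp_coprime)
    then show ?thesis using qq using coprime_dvd_mult_right_iff by blast
  qed
  moreover have "B > 0" unfolding B_def using pos by (simp add: add_pos_pos)
  moreover have "B < q^2"
  proof -
    have id: "D * B^2 + (x*x' - D*y*y')^2 = (x^2 + D*y^2) * (x'^2 + D*y'^2)"
      unfolding B_def power2_eq_square by (simp add: algebra_simps)
    have "(x^2 + D*y^2) * (x'^2 + D*y'^2) = q^2 * q^2" by (simp only: e1[symmetric] e2[symmetric])
    moreover have "(x*x' - D*y*y')^2 \<ge> 0" by simp
    ultimately have "D * B^2 \<le> q^2 * q^2" using id by linarith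
    moreover have "1 * B^2 < D * B^2" using D \<open>B > 0\<close> by (intro mult_strict_right_mono) auto
    ultimately have lt: "B*B < q^2 * q^2" unfolding power2_eq_square[of B] by linarith
    show ?thesis
    proof (rule ccontr)
      assume "\<not> B < q^2"
      then have "q^2 \<le> B" by simp
      then have "q^2 * q^2 \<le> B * B" using \<open>B > 0\<close> by (intro mult_mono) auto
      then show False using lt by simp
    qed
  qed
  moreover have "\<bar>A\<bar> < q^2"
  proof -
    have Dy: "D*y^2 \<ge> 0" "D*y'^2 \<ge> 0" using D by simp_all
    have "x^2 \<le> q^2" using e1 Dy by linarith
    then have "x \<le> q" by (rule power2_le_imp_le) (use q0 in simp)
    have "x'^2 \<le> q^2" using e2 Dy by linarith
    then have "x' \<le> q" by (rule power2_le_imp_le) (use q0 in simp)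
    have "1*y^2 < D*y^2" using D pos by (intro mult_strict_right_mono) auto
    moreover have "x^2 \<ge> 0" by simp
    ultimately have "y^2 < q^2" using e1 by linarith
    then have "y < q" by (rule power2_less_imp_less) (use q0 in simp)
    have "1*y'^2 < D*y'^2" using D pos by (intro mult_strict_right_mono) auto
    moreover have "x'^2 \<ge> 0" by simp
    ultimately have "y'^2 < q^2" using e2 by linarith
    then have "y' < q" by (rule power2_less_imp_less) (use q0 in simp)
    have "x*y' < q*q" by (rule mult_le_less_imp_less[OF \<open>x \<le> q\<close> \<open>y' < q\<close>]) (use pos in auto)
    moreover have "x'*y < q*q" by (rule mult_le_less_imp_less[OF \<open>x' \<le> q\<close> \<open>y < q\<close>]) (use pos in auto)
    moreover have "x*y' > 0" "x'*y > 0" using pos by auto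
    ultimately show ?thesis unfolding A_def power2_eq_square abs_less_iff by (intro conjI; linarith)
  qed
  ultimately have "A = 0"
  proof -
    assume h: "q^2 dvd A \<or> q^2 dvd B" "B > 0" "B < q^2" "\<bar>A\<bar> < q^2"
    have "\<not> q^2 dvd B"
    proof
      assume "q^2 dvd B"
      then have "q^2 \<le> B" using h(2) by (rule zdvd_imp_le)
      then show False using h(3) by simp
    qed
    then have "q^2 dvd A" using h(1) by blast
    show "A = 0"
    proof (rule ccontr)
      assume "A \<noteq> 0"
      then have "\<bar>q^2\<bar> \<le> \<bar>A\<bar>" using \<open>q^2 dvd A\<close> by (rule dvd_imp_le_int)
      then show False using h(4) by simp
    qed
  qed
  then have eq: "x*y' = x'*y" unfolding A_def by simp
  have "x dvd x' * y" unfolding eq[symmetric] by simp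
  then have "x dvd x'" using cop(1) coprime_dvd_mult_left_iff by blast
  moreover have "x' dvd x * y'" unfolding eq by simp
  then have "x' dvd x" using cop(2) coprime_dvd_mult_left_iff by blast
  ultimately have "x = x'" using pos by (simp add: zdvd_antisym_nonneg)
  then show ?thesis using eq pos by simp
qed



lemma rep_exists:
  fixes D q :: int
  assumes D: "D > 1" and q: "prime q" "odd q" and nD: "\<not> q dvd D"
    and qr: "\<exists>y. [y^2 = -D] (mod q)" and cls: "class_group_elem_2 (-4*D)"
  shows "\<exists>x y. x > 0 \<and> y > 0 \<and> coprime x y \<and> q^2 = x^2 + D*y^2"
proof -
  have q0: "q > 0" using q prime_gt_0_int by blast
  obtain b where "[b^2 = -D] (mod q)" using qr by blast
  then have "q dvd b^2 - (-D)" by (simp only: cong_iff_dvd_diff)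
  then have "q dvd b^2 + D" by simp
  then obtain c where bc: "b^2 + D = q*c" by (elim dvdE)
  have nb: "\<not> q dvd b"
  proof
    assume "q dvd b"
    then have "q dvd b^2" by (metis dvd_mult2 power2_eq_square)
    moreover have "q dvd b^2 + D" using bc by simp
    ultimately have "q dvd (b^2 + D) - b^2" by (rule dvd_diff[rotated])
    then show False using nD by simp
  qed
  have n2: "\<not> q dvd 2"
  proof
    assume "q dvd 2"
    then have "q = 2" using q zdvd_imp_le[of q 2] prime_ge_2_int[of q] by auto
    then show False using q by simp
  qed
  have n2b: "\<not> q dvd 2*b" using nb n2 q by (simp add: prime_dvd_mult_iff)
  have cop: "coprime q (2*b)" by (rule prime_imp_coprime[OF q(1) n2b])
  have disc: "(2*b)^2 - 4*q*c = -4*D"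
  proof -
    have "4*q*c = 4*(b^2+D)" using bc by simp
    moreover have "(2*b)^2 = 4*b^2" by (simp add: power_mult_distrib)
    ultimately show ?thesis by simp
  qed
  have prim: "prim_pos_def_form (-4*D) (q, 2*b, c)"
    unfolding prim_pos_def_form_def form_disc_def using disc cop q0 D
    by (simp add: coprime_iff_gcd_eq_1)
  then have "form_equiv (q, 2*b, c) (q, -(2*b), c)"
    using cls unfolding class_group_elem_2_def by blast
  then obtain P Q R S where det: "P*S - Q*R = 1"
    and H: "\<And>x y. form_eval (q, -(2*b), c) x y = form_eval (q, 2*b, c) (P*x + Q*y) (R*x + S*y)"
    unfolding form_equiv_def by blast
  have e10: "q = q*P^2 + 2*b*P*R + c*R^2" using H[of 1 0] by (simp add: form_eval_def)
  have cross: "-2*b = 2*q*P*Q + 2*b*(P*S+Q*R) + 2*c*R*S"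
  proof -
    have "form_eval (q, -(2*b), c) 1 1 - form_eval (q, -(2*b), c) 1 0 - form_eval (q, -(2*b), c) 0 1 = -2*b"
      by (simp add: form_eval_def)
    moreover have "form_eval (q, 2*b, c) (P+Q) (R+S) - form_eval (q, 2*b, c) P R - form_eval (q, 2*b, c) Q S
       = 2*q*P*Q + 2*b*(P*S+Q*R) + 2*c*R*S"
      by (simp add: form_eval_def power2_eq_square algebra_simps)
    moreover have "form_eval (q, -(2*b), c) 1 1 = form_eval (q, 2*b, c) (P+Q) (R+S)" using H[of 1 1] by simp
    moreover have "form_eval (q, -(2*b), c) 1 0 = form_eval (q, 2*b, c) P R" using H[of 1 0] by simp
    moreover have "form_eval (q, -(2*b), c) 0 1 = form_eval (q, 2*b, c) Q S" using H[of 0 1] by simp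
    ultimately show ?thesis by linarith
  qed
  have R0: "R \<noteq> 0"
  proof
    assume "R = 0"
    then have "P*S = 1" using det by simp
    then have "-2*b = 2*q*P*Q + 2*b" using cross \<open>R = 0\<close> by simp
    then have "2*b = q*(-(P*Q))" by (simp add: algebra_simps)
    then have "q dvd 2*b" by (metis dvdI)
    then show False using n2b by simp
  qed
  define u where "u = q*P + b*R"
  have ident: "q^2 = u^2 + D*R^2"
  proof -
    have "u^2 + D*R^2 = q*(q*P^2 + 2*b*P*R) + (b^2+D)*R^2"
      unfolding u_def by (simp add: power2_eq_square algebra_simps)
    also have "\<dots> = q*(q*P^2 + 2*b*P*R + c*R^2)" unfolding bc by (simp add: algebra_simps)
    also have "\<dots> = q*q" using e10 by simp
    finally show ?thesis by (simp add: power2_eq_square)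
  qed
  have copuR: "coprime u R"
  proof (rule coprime_by_primes)
    fix r :: int assume r: "prime r" "r dvd u" "r dvd R"
    then have "r dvd u^2 + D*R^2" by (simp add: power2_eq_square)
    then have "r dvd q^2" using ident by simp
    then have "r dvd q" using r(1) prime_dvd_power by blast
    then have "r = q" by (rule primes_dvd_imp_eq[OF r(1) q(1)])
    then obtain u1 R1 where u1: "u = q*u1" and R1: "R = q*R1" using r by (auto elim!: dvdE)
    have "q^2 * 1 = q^2 * (u1^2 + D*R1^2)" using ident unfolding u1 R1 by (simp add: power_mult_distrib algebra_simps)
    then have one: "u1^2 + D*R1^2 = 1" using q0 by (metis mult_left_cancel power_not_zero less_irrefl)
    have "R1 \<noteq> 0" using R0 R1 by auto
    then have "R1^2 \<ge> 1" by (simp add: power2_eq_square) (meson int_one_le_iff_zero_less zero_less_mult_iff linorder_neqE_linordered_idom mult_neg_neg)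
    then have "D*R1^2 \<ge> D*1" using D by (intro mult_left_mono) auto
    moreover have "u1^2 \<ge> 0" by simp
    ultimately show False using one D by linarith
  qed
  have u0: "u \<noteq> 0"
  proof
    assume "u = 0"
    then have "is_unit R" using copuR by simp
    then have "R^2 = 1" by (metis is_unit_power_iff power2_abs zdvd1_eq abs_power2 one_power2 int_one_le_iff_zero_less)
    then have "q^2 = D" using ident \<open>u = 0\<close> by simp
    then have "q dvd D" by (metis dvd_triv_left power2_eq_square)
    then show False using nD by simp
  qed
  show ?thesis
  proof (intro exI conjI)
    show "\<bar>u\<bar> > 0" using u0 by simp
    show "\<bar>R\<bar> > 0" using R0 by simp
    show "coprime \<bar>u\<bar> \<bar>R\<bar>" using copuR by simp
    show "q^2 = \<bar>u\<bar>^2 + D*\<bar>R\<bar>^2" using ident by simp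
  qed
qed



lemma zeta_char:
  fixes D :: int and q :: nat
  assumes D: "D > 1" and q: "prime q" "odd q" and L: "Legendre (-D) (int q) = 1"
    and cls: "class_group_elem_2 (-4*D)"
  shows "\<exists>x0 y0. x0 > 0 \<and> y0 > 0 \<and> coprime x0 y0 \<and> (int q)^2 = x0^2 + D*y0^2
          \<and> zeta D q = emb D (x0, y0) / of_nat q"
proof -
  have qi: "prime (int q)" "odd (int q)" using q by auto
  have nc: "\<not> [-D = 0] (mod int q)" and qr: "QuadRes (int q) (-D)"
    using L unfolding Legendre_def by (auto split: if_splits)
  have nD: "\<not> int q dvd D" using nc by (simp add: cong_0_iff)
  have qr': "\<exists>y. [y^2 = -D] (mod int q)" using qr unfolding QuadRes_def .
  obtain x0 y0 where xy: "x0 > 0" "y0 > 0" "coprime x0 y0" "(int q)^2 = x0^2 + D*y0^2"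
    using rep_exists[OF D qi nD qr' cls] by blast
  have the: "(THE (x, y). x > 0 \<and> y > 0 \<and> coprime x y \<and> (int q)^2 = x^2 + D * y^2) = (x0, y0)"
  proof (rule the_equality)
    show "case (x0, y0) of (x, y) \<Rightarrow> x > 0 \<and> y > 0 \<and> coprime x y \<and> (int q)^2 = x^2 + D * y^2"
      using xy by simp
  next
    fix pr :: "int \<times> int"
    assume "case pr of (x, y) \<Rightarrow> x > 0 \<and> y > 0 \<and> coprime x y \<and> (int q)^2 = x^2 + D * y^2"
    then obtain x y where pr: "pr = (x, y)" and h: "x > 0" "y > 0" "coprime x y" "(int q)^2 = x^2 + D * y^2"
      by (cases pr) auto
    have "x = x0 \<and> y = y0" using rep_unique[OF D qi nD h(1,2) xy(1,2) h(3) xy(3) h(4) xy(4)] .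
    then show "pr = (x0, y0)" using pr by simp
  qed
  have "zeta D q = emb D (x0, y0) / of_nat q"
    unfolding zeta_def the emb_def by simp
  then show ?thesis using xy by blast
qed

lemma zeta_powi:
  fixes D :: int and q :: nat and x0 y0 e :: int and n :: nat
  assumes D: "D > 1" and q0: "q > 0" and rep: "(int q)^2 = x0^2 + D*y0^2"
    and z: "zeta D q = emb D (x0, y0) / of_nat q" and e: "e = 1 \<or> e = -1"
  shows "zeta D q powi (e * int n) = emb D (ppow D (x0, e*y0) n) / of_nat q ^ n"
  using e
proof
  assume "e = 1"
  then show ?thesis using z D by (simp add: emb_ppow power_divide)
next
  assume e1: "e = -1"
  have pm: "pmul D (x0, y0) (x0, -y0) = (int q ^ 2, 0)"
    unfolding pmul_def using rep by (simp add: power2_eq_square)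
  have "emb D (x0, y0) * emb D (x0, -y0) = of_nat q ^ 2"
    using emb_pmul[of D "(x0,y0)" "(x0,-y0)"] D pm by (simp add: emb_def)
  then have "zeta D q * (emb D (x0, -y0) / of_nat q) = 1"
    unfolding z using q0 by (simp add: power2_eq_square field_simps)
  then have inv: "inverse (zeta D q) = emb D (x0, -y0) / of_nat q"
    by (rule inverse_unique)
  have "zeta D q powi (e * int n) = inverse (zeta D q ^ n)"
    using e1 by (simp add: power_int_minus)
  also have "\<dots> = (emb D (x0, -y0) / of_nat q) ^ n"
    by (simp add: power_inverse[symmetric] inv)
  also have "\<dots> = emb D (ppow D (x0, e*y0) n) / of_nat q ^ n"
    using e1 D by (simp add: emb_ppow power_divide)
  finally show ?thesis .
qed



lemma prod_emb:
  fixes D :: int and g d :: "nat \<Rightarrow> complex" and f :: "nat \<Rightarrow> int \<times> int"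
  assumes D: "D \<ge> 0" and h: "\<forall>i<n. g i = emb D (f i) / d i"
  shows "(\<Prod>i<n. g i) = emb D (pprod D f n) / (\<Prod>i<n. d i)"
  using h
proof (induction n)
  case 0 then show ?case by (simp add: emb_def)
next
  case (Suc n)
  then have IH: "(\<Prod>i<n. g i) = emb D (pprod D f n) / (\<Prod>i<n. d i)" by simp
  have gn: "g n = emb D (f n) / d n" using Suc.prems by simp
  have "(\<Prod>i<Suc n. g i) = (\<Prod>i<n. g i) * g n" by simp
  also have "\<dots> = (emb D (pprod D f n) * emb D (f n)) / ((\<Prod>i<n. d i) * d n)"
    unfolding IH gn by (rule times_divide_times_eq)
  also have "\<dots> = emb D (pprod D f (Suc n)) / (\<Prod>i<Suc n. d i)"
    using D by (simp add: emb_pmul)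
  finally show ?case .
qed

lemma prim_prod:
  fixes D :: int and k :: nat and p X Y e :: "nat \<Rightarrow> int" and \<alpha> :: "nat \<Rightarrow> nat"
  assumes D: "D > 1" and inj: "inj_on p {..<k}"
    and H: "\<forall>i<k. prime (p i) \<and> odd (p i) \<and> \<not> p i dvd D \<and> X i > 0 \<and> Y i > 0 \<and> coprime (X i) (Y i)
             \<and> p i ^ 2 = X i ^ 2 + D * Y i ^ 2 \<and> (e i = 1 \<or> e i = -1)"
  shows "coprime (fst (pprod D (\<lambda>i. ppow D (X i, e i * Y i) (\<alpha> i)) k))
                 (snd (pprod D (\<lambda>i. ppow D (X i, e i * Y i) (\<alpha> i)) k))"
proof (rule coprime_by_primes)
  define \<delta> where "\<delta> = (\<lambda>i. ppow D (X i, e i * Y i) (\<alpha> i))"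
  define \<gamma> where "\<gamma> = pprod D \<delta> k"
  fix r :: int
  assume r: "prime r" "r dvd fst (pprod D (\<lambda>i. ppow D (X i, e i * Y i) (\<alpha> i)) k)"
                   "r dvd snd (pprod D (\<lambda>i. ppow D (X i, e i * Y i) (\<alpha> i)) k)"
  then have ru: "r dvd fst \<gamma>" and rv: "r dvd snd \<gamma>" unfolding \<gamma>_def \<delta>_def by auto
  have nd: "pnorm D (\<delta> i) = p i ^ (2 * \<alpha> i)" if "i < k" for i
  proof -
    have "e i * e i = 1" using H that by auto
    then have "pnorm D (X i, e i * Y i) = p i ^ 2" using H that unfolding pnorm_def
      by (simp add: power2_eq_square algebra_simps)
    then show ?thesis unfolding \<delta>_def pnorm_ppow by (simp add: power_mult)
  qed
  have "r dvd pnorm D \<gamma>" using ru rv unfolding pnorm_def by (simp add: power2_eq_square)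
  also have "pnorm D \<gamma> = (\<Prod>i<k. p i ^ (2 * \<alpha> i))" unfolding \<gamma>_def pnorm_pprod using nd by simp
  finally have "\<exists>j\<in>{..<k}. r dvd p j ^ (2 * \<alpha> j)" using r(1) by (simp add: prime_dvd_prod_iff)
  then obtain j where j: "j < k" "r dvd p j ^ (2 * \<alpha> j)" by auto
  have Hj: "prime (p j)" "odd (p j)" "\<not> p j dvd D" "X j > 0" "Y j > 0" "coprime (X j) (Y j)"
     "p j ^ 2 = X j ^ 2 + D * Y j ^ 2" "e j = 1 \<or> e j = -1" using H j(1) by auto
  have "r dvd p j" using j(2) r(1) prime_dvd_power by blast
  then have rq: "r = p j" by (rule primes_dvd_imp_eq[OF r(1) Hj(1)])
  define q where "q = p j"
  have q: "prime q" using Hj q_def by simp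
  have qu: "q dvd fst \<gamma>" and qv: "q dvd snd \<gamma>" using ru rv rq q_def by auto
  have n2: "\<not> q dvd 2"
  proof
    assume "q dvd 2"
    then have "q = 2" using q zdvd_imp_le[of q 2] prime_ge_2_int[of q] by auto
    then show False using Hj(2) q_def by simp
  qed
  have nX: "\<not> q dvd X j"
  proof
    assume "q dvd X j"
    then have "q dvd X j ^ 2" by (metis dvd_mult2 power2_eq_square)
    moreover have "D * Y j ^ 2 = q ^ 2 - X j ^ 2" using Hj(7) q_def by simp
    moreover have "q dvd q^2" by (simp add: power2_eq_square)
    ultimately have "q dvd D * Y j ^ 2" by (metis dvd_diff)
    then have "q dvd Y j ^ 2" using q Hj(3) q_def by (simp add: prime_dvd_mult_iff)
    then have "q dvd Y j" using q prime_dvd_power by blast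
    then show False using \<open>q dvd X j\<close> Hj(6) q by (meson coprime_common_divisor not_prime_unit)
  qed
  have nY: "\<not> q dvd Y j"
  proof
    assume "q dvd Y j"
    then have "q dvd D * Y j ^ 2" by (metis dvd_mult2 dvd_mult power2_eq_square)
    moreover have "X j ^ 2 = q ^ 2 - D * Y j ^ 2" using Hj(7) q_def by simp
    moreover have "q dvd q^2" by (simp add: power2_eq_square)
    ultimately have "q dvd X j ^ 2" by (metis dvd_diff)
    then have "q dvd X j" using q prime_dvd_power by blast
    then show False using nX by simp
  qed
  have "coprime q (Y j)" by (rule prime_imp_coprime[OF q nY])
  then have "gcd q (Y j) = 1" by simp
  then obtain a y' where bz: "a * q + y' * Y j = 1" using bezout_int[of q "Y j"] by metis
  define s where "s = - X j * y'"
  have qs1: "q dvd X j + Y j * s"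
  proof -
    have bz': "1 - Y j * y' = a * q" using bz by (simp add: algebra_simps eq_diff_eq)
    have "X j + Y j * s = X j * (1 - Y j * y')" unfolding s_def by (simp add: algebra_simps)
    also have "\<dots> = q * (X j * a)" unfolding bz' by (simp add: algebra_simps)
    finally have "X j + Y j * s = q * (X j * a)" .
    then show ?thesis by simp
  qed
  have qs2: "q dvd s^2 + D"
  proof -
    have "Y j ^ 2 * (s^2 + D) = X j ^ 2 * ((Y j * y' - 1) * (Y j * y' + 1)) + (X j ^ 2 + D * Y j ^ 2)"
      unfolding s_def by (simp add: power2_eq_square algebra_simps)
    also have "\<dots> = X j ^ 2 * ((- a * q) * (Y j * y' + 1)) + q * q"
    proof -
      have "Y j * y' - 1 = - a * q" using bz by (simp add: algebra_simps)
      then show ?thesis using Hj(7) q_def by (simp add: power2_eq_square)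
    qed
    also have "\<dots> = q * (X j ^ 2 * (- a * (Y j * y' + 1)) + q)" by (simp add: algebra_simps)
    finally have "q dvd Y j ^ 2 * (s^2 + D)" by simp
    moreover have "\<not> q dvd Y j ^ 2" using nY q prime_dvd_power by blast
    ultimately show ?thesis using q by (simp add: prime_dvd_mult_iff)
  qed
  define t where "t = - e j * s"
  have ej2: "e j * e j = 1" using Hj(8) by auto
  have tt: "t^2 = s^2" unfolding t_def using ej2 by (simp add: power2_eq_square algebra_simps)
  have qt: "q dvd t^2 + D" using qs2 tt by simp
  have "q dvd phi t \<gamma>" unfolding phi_def using qu qv by simp
  moreover have "[phi t \<gamma> = (\<Prod>i<k. phi t (\<delta> i))] (mod q)" unfolding \<gamma>_def by (rule phi_pprod[OF qt])
  ultimately have "q dvd (\<Prod>i<k. phi t (\<delta> i))" by (simp add: cong_dvd_iff)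
  then have "\<exists>i\<in>{..<k}. q dvd phi t (\<delta> i)" using q by (simp add: prime_dvd_prod_iff)
  then obtain i where i: "i < k" "q dvd phi t (\<delta> i)" by auto
  have "[phi t (\<delta> i) = phi t (X i, e i * Y i) ^ \<alpha> i] (mod q)" unfolding \<delta>_def by (rule phi_ppow[OF qt])
  then have "q dvd phi t (X i, e i * Y i) ^ \<alpha> i" using i(2) by (simp add: cong_dvd_iff)
  then have w: "q dvd phi t (X i, e i * Y i)" using q prime_dvd_power by blast
  show False
  proof (cases "i = j")
    case True
    have "phi t (X j, e j * Y j) = 2 * X j - (X j + Y j * s)"
      unfolding phi_def t_def using ej2 by (simp add: algebra_simps)
    then have "q dvd 2 * X j - (X j + Y j * s)" using w True by simp
    then have "q dvd (2 * X j - (X j + Y j * s)) + (X j + Y j * s)" using qs1 by (rule dvd_add)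
    then have "q dvd 2 * X j" by simp
    then show False using n2 nX q by (simp add: prime_dvd_mult_iff)
  next
    case False
    have "q dvd phi t (X i, e i * Y i) * phi (-t) (X i, e i * Y i)" using w by simp
    moreover have "[phi t (X i, e i * Y i) * phi (-t) (X i, e i * Y i) = pnorm D (X i, e i * Y i)] (mod q)"
      by (rule phi_conj[OF qt])
    ultimately have "q dvd pnorm D (X i, e i * Y i)" by (simp add: cong_dvd_iff)
    moreover have "e i * e i = 1" using H i(1) by auto
    then have "pnorm D (X i, e i * Y i) = p i ^ 2" using H i(1) unfolding pnorm_def
      by (simp add: power2_eq_square algebra_simps)
    ultimately have "q dvd p i ^ 2" by simp
    then have "q dvd p i" using q prime_dvd_power by blast
    then have "q = p i" using q H i(1) by (simp add: primes_dvd_imp_eq)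
    then have "p j = p i" using q_def by simp
    then have "j = i" using inj i(1) j(1) by (simp add: inj_on_eq_iff)
    then show False using False by simp
  qed
qed



lemma Re_Im_emb: "D \<ge> 0 \<Longrightarrow> Re (emb D a) = real_of_int (fst a) \<and> Im (emb D a) = real_of_int (snd a) * sqrt (real_of_int D)"
  unfolding emb_def sqrtmD_def by simp

lemma final_arith:
  fixes u v Cn a b c m :: int
  assumes Cn: "Cn > 0" and c: "c > 0" and cop: "coprime u v"
    and eu: "c * \<bar>u\<bar> = Cn * a" and ev: "c * \<bar>v\<bar> = Cn * b"
    and g: "gcd (gcd a b) c = 1"
  shows "c = Cn"
proof -
  have "\<bar>c * u\<bar> = c * \<bar>u\<bar>" "\<bar>c * v\<bar> = c * \<bar>v\<bar>" using c by (simp_all add: abs_mult)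
  then have "Cn dvd \<bar>c * u\<bar>" "Cn dvd \<bar>c * v\<bar>" using eu ev by simp_all
  then have "Cn dvd c * u" "Cn dvd c * v" by simp_all
  then have "Cn dvd gcd (c * u) (c * v)" by simp
  also have "gcd (c * u) (c * v) = \<bar>c\<bar> * gcd u v" by (simp add: gcd_mult_distrib_int)
  also have "gcd u v = 1" using cop by simp
  finally have "Cn dvd c" using c by simp
  then obtain m where m: "c = Cn * m" by (elim dvdE)
  have "Cn * (m * \<bar>u\<bar>) = Cn * a" using eu m by (simp add: algebra_simps)
  then have ma: "a = m * \<bar>u\<bar>" using Cn by simp
  have "Cn * (m * \<bar>v\<bar>) = Cn * b" using ev m by (simp add: algebra_simps)
  then have mb: "b = m * \<bar>v\<bar>" using Cn by simp
  have "m dvd a" "m dvd b" "m dvd c" using ma mb m by simp_all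
  then have "m dvd gcd (gcd a b) c" by simp
  then have "m dvd 1" using g by simp
  moreover have "m > 0" using m Cn c by (simp add: zero_less_mult_iff)
  ultimately have "m = 1" by simp
  then show ?thesis using m by simp
qed



theorem theorem3p8:
  fixes D :: int and k :: nat and p \<alpha> :: "nat \<Rightarrow> nat" and e :: "nat \<Rightarrow> int"
    and \<epsilon> \<sigma> \<tau> :: complex and z :: complex and a b c :: nat
  assumes D_gt: "D > 1"
    and D_sqf: "squarefree D"
    and D_mod: "(- D) mod 4 = 2 \<or> (- D) mod 4 = 3"
    and cls: "class_group_elem_2 (- 4 * D)"
    and z_in: "z \<in> G_D D"
    and p_inj: "inj_on p {..<k}"
    and p_prime: "\<forall>i<k. prime (p i) \<and> odd (p i) \<and> Legendre (- D) (int (p i)) = 1"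
    and \<alpha>_pos: "\<forall>i<k. \<alpha> i \<ge> 1"
    and e_sign: "\<forall>i<k. e i = 1 \<or> e i = -1"
    and \<epsilon>_sign: "\<epsilon> = 1 \<or> \<epsilon> = -1"
    and z_prod: "z = \<epsilon> * (\<Prod>i<k. zeta D (p i) powi (e i * int (\<alpha> i)))"
    and abc: "int a ^ 2 + D * int b ^ 2 = int c ^ 2"
    and normalized: "gcd (gcd a b) c = 1"
    and \<sigma>_sign: "\<sigma> = 1 \<or> \<sigma> = -1"
    and \<tau>_sign: "\<tau> = 1 \<or> \<tau> = -1"
    and z_abc: "z = (\<sigma> * of_nat a + \<tau> * of_nat b * sqrtmD D) / of_nat c"
  shows "c = (\<Prod>i<k. p i ^ \<alpha> i)"
proof -
  have D0: "D \<ge> 0" using D_gt by simp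
  have cls': "class_group_elem_2 (-4*D)" using cls by simp
  have ndiv: "\<not> int (p i) dvd D" if "i < k" for i
  proof -
    have "\<not> [-D = 0] (mod int (p i))"
      using p_prime that unfolding Legendre_def by (auto split: if_splits)
    then show ?thesis by (simp add: cong_0_iff)
  qed
  have "\<forall>i. \<exists>xy. i < k \<longrightarrow> (fst xy > 0 \<and> snd xy > 0 \<and> coprime (fst xy) (snd xy)
          \<and> (int (p i))^2 = (fst xy)^2 + D*(snd xy)^2 \<and> zeta D (p i) = emb D xy / of_nat (p i))"
  proof
    fix i
    show "\<exists>xy. i < k \<longrightarrow> (fst xy > 0 \<and> snd xy > 0 \<and> coprime (fst xy) (snd xy)
          \<and> (int (p i))^2 = (fst xy)^2 + D*(snd xy)^2 \<and> zeta D (p i) = emb D xy / of_nat (p i))"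
    proof (cases "i < k")
      case True
      then have "prime (p i)" "odd (p i)" "Legendre (- D) (int (p i)) = 1" using p_prime by auto
      from zeta_char[OF D_gt this cls'] obtain x0 y0 where
        "x0 > 0 \<and> y0 > 0 \<and> coprime x0 y0 \<and> (int (p i))^2 = x0^2 + D*y0^2
          \<and> zeta D (p i) = emb D (x0, y0) / of_nat (p i)" by blast
      then show ?thesis by (intro exI[of _ "(x0, y0)"]) simp
    next
      case False then show ?thesis by simp
    qed
  qed
  then obtain XY where XY: "\<forall>i. i < k \<longrightarrow> (fst (XY i) > 0 \<and> snd (XY i) > 0 \<and> coprime (fst (XY i)) (snd (XY i))
          \<and> (int (p i))^2 = (fst (XY i))^2 + D*(snd (XY i))^2 \<and> zeta D (p i) = emb D (XY i) / of_nat (p i))"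
    by metis
  define X where "X = (\<lambda>i. fst (XY i))"
  define Y where "Y = (\<lambda>i. snd (XY i))"
  define \<delta> where "\<delta> = (\<lambda>i. ppow D (X i, e i * Y i) (\<alpha> i))"
  define \<gamma> where "\<gamma> = pprod D \<delta> k"
  define Cn where "Cn = (\<Prod>i<k. p i ^ \<alpha> i)"
  have XYi: "XY i = (X i, Y i)" for i unfolding X_def Y_def by simp
  have fac: "\<forall>i<k. zeta D (p i) powi (e i * int (\<alpha> i)) = emb D (\<delta> i) / of_nat (p i) ^ \<alpha> i"
  proof (intro allI impI)
    fix i assume i: "i < k"
    have "p i > 0" using p_prime i prime_gt_0_nat by blast
    moreover have "(int (p i))^2 = (X i)^2 + D*(Y i)^2" "zeta D (p i) = emb D (X i, Y i) / of_nat (p i)"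
      using XY i unfolding X_def Y_def by auto
    moreover have "e i = 1 \<or> e i = -1" using e_sign i by auto
    ultimately show "zeta D (p i) powi (e i * int (\<alpha> i)) = emb D (\<delta> i) / of_nat (p i) ^ \<alpha> i"
      unfolding \<delta>_def by (rule zeta_powi[OF D_gt])
  qed
  have prodeq: "(\<Prod>i<k. zeta D (p i) powi (e i * int (\<alpha> i))) = emb D \<gamma> / (\<Prod>i<k. (of_nat (p i) :: complex) ^ \<alpha> i)"
    unfolding \<gamma>_def by (rule prod_emb[OF D0 fac])
  have Cnc: "(\<Prod>i<k. (of_nat (p i) :: complex) ^ \<alpha> i) = of_nat Cn" unfolding Cn_def by simp
  have zeq: "z = \<epsilon> * (emb D \<gamma> / of_nat Cn)" using z_prod prodeq Cnc by simp
  have Cn0: "Cn > 0" unfolding Cn_def using p_prime prime_gt_0_nat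
    by (intro prod_pos) auto
  have norm: "pnorm D \<gamma> = (int Cn)^2"
  proof -
    have "pnorm D (\<delta> i) = (int (p i) ^ \<alpha> i)^2" if i: "i < k" for i
    proof -
      have "e i * e i = 1" using e_sign i by auto
      then have "pnorm D (X i, e i * Y i) = (int (p i))^2" using XY i unfolding pnorm_def X_def Y_def
        by (simp add: power2_eq_square algebra_simps)
      then show ?thesis unfolding \<delta>_def pnorm_ppow by (simp add: power_mult[symmetric] power_mult_distrib mult.commute)
    qed
    then have "pnorm D \<gamma> = (\<Prod>i<k. (int (p i) ^ \<alpha> i)^2)" unfolding \<gamma>_def pnorm_pprod by simp
    also have "\<dots> = (\<Prod>i<k. int (p i) ^ \<alpha> i)^2" by (simp add: prod_power_distrib)
    also have "\<dots> = (int Cn)^2" unfolding Cn_def by simp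
    finally show ?thesis .
  qed
  have cop: "coprime (fst \<gamma>) (snd \<gamma>)"
  proof -
    have inj: "inj_on (\<lambda>i. int (p i)) {..<k}" using p_inj by (simp add: inj_on_def)
    have H: "\<forall>i<k. prime (int (p i)) \<and> odd (int (p i)) \<and> \<not> int (p i) dvd D \<and> X i > 0 \<and> Y i > 0 \<and> coprime (X i) (Y i)
             \<and> int (p i) ^ 2 = X i ^ 2 + D * Y i ^ 2 \<and> (e i = 1 \<or> e i = -1)"
      using p_prime ndiv XY e_sign unfolding X_def Y_def by auto
    show ?thesis using prim_prod[OF D_gt inj H, of \<alpha>] unfolding \<gamma>_def \<delta>_def by simp
  qed
  define u where "u = fst \<gamma>"
  define v where "v = snd \<gamma>"
  define sD where "sD = sqrt (real_of_int D)"
  have sD0: "sD > 0" unfolding sD_def using D_gt by simp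
  have embc: "emb D \<gamma> = Complex (real_of_int u) (real_of_int v * sD)"
    using Re_Im_emb[OF D0, of \<gamma>] unfolding u_def v_def sD_def by (simp add: complex_eq_iff)
  have wc: "sqrtmD D = Complex 0 sD" unfolding sqrtmD_def sD_def by (simp add: complex_eq_iff)
  have sgn: "\<exists>r. (r = 1 \<or> r = (-1::real)) \<and> w = complex_of_real r" if "w = 1 \<or> w = -1" for w
    using that
  proof
    assume "w = 1" then show ?thesis by (intro exI[of _ 1]) simp
  next
    assume "w = -1" then show ?thesis by (intro exI[of _ "-1"]) simp
  qed
  obtain es where es: "es = 1 \<or> es = -1" "\<epsilon> = complex_of_real es" using sgn[OF \<epsilon>_sign] by blast
  obtain ss where ss: "ss = 1 \<or> ss = -1" "\<sigma> = complex_of_real ss" using sgn[OF \<sigma>_sign] by blast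
  obtain ts where ts: "ts = 1 \<or> ts = -1" "\<tau> = complex_of_real ts" using sgn[OF \<tau>_sign] by blast
  have z1: "Re z = es * real_of_int u / real Cn" "Im z = es * (real_of_int v * sD) / real Cn"
    unfolding zeq embc es(2) by simp_all
  have z2: "Re z = ss * real a / real c" "Im z = ts * real b * sD / real c"
    unfolding z_abc wc ss(2) ts(2) by simp_all
  have c0: "c > 0"
  proof (rule ccontr)
    assume "\<not> c > 0"
    then have "c = 0" by simp
    then have "es * real_of_int u / real Cn = 0" "es * (real_of_int v * sD) / real Cn = 0"
      using z1 z2 by simp_all
    then have "u = 0" "v = 0" using es(1) Cn0 sD0 by auto
    then have "pnorm D \<gamma> = 0" unfolding pnorm_def u_def v_def by simp
    then show False using norm Cn0 by simp
  qed
  have r1: "es * real_of_int u * real c = ss * real a * real Cn"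
  proof -
    have "es * real_of_int u / real Cn = ss * real a / real c" using z1(1) z2(1) by simp
    then show ?thesis using c0 Cn0 by (simp add: frac_eq_eq)
  qed
  have r2: "es * real_of_int v * real c = ts * real b * real Cn"
  proof -
    have "es * (real_of_int v * sD) / real Cn = ts * real b * sD / real c" using z1(2) z2(2) by simp
    then have "(es * real_of_int v * real c) * sD = (ts * real b * real Cn) * sD" using c0 Cn0
      by (simp add: frac_eq_eq algebra_simps)
    then show ?thesis using sD0 by simp
  qed
  have "\<bar>es * real_of_int u * real c\<bar> = \<bar>ss * real a * real Cn\<bar>" using r1 by simp
  then have "real_of_int (int c * \<bar>u\<bar>) = real_of_int (int Cn * int a)"
    using es(1) ss(1) by (auto simp: abs_mult mult.commute)
  then have iu: "int c * \<bar>u\<bar> = int Cn * int a" by (simp only: of_int_eq_iff)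
  have "\<bar>es * real_of_int v * real c\<bar> = \<bar>ts * real b * real Cn\<bar>" using r2 by simp
  then have "real_of_int (int c * \<bar>v\<bar>) = real_of_int (int Cn * int b)"
    using es(1) ts(1) by (auto simp: abs_mult mult.commute)
  then have iv: "int c * \<bar>v\<bar> = int Cn * int b" by (simp only: of_int_eq_iff)
  have g: "gcd (gcd (int a) (int b)) (int c) = 1" using normalized
    by (metis gcd_int_int_eq of_nat_1)
  have "int c = int Cn"
    by (rule final_arith[OF _ _ _ iu iv g]) (use Cn0 c0 cop u_def v_def in auto)
  then show ?thesis unfolding Cn_def by (simp only: of_nat_eq_iff)
qed


end
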